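(* Let $\mathcal{F}(X)\subseteq\Psi$ with admissible topology $\Delta$. If $\mathbb{F}$ is commutative and there is a base $\beta$ for the topology of $X$ with $U^+=\{A\in\Psi:A\subseteq U\}\in\Delta$ for every $U\in\beta$, then $(X,\mathbb{F})$ is weakly mixing if and only if $(\Psi,\overline{\mathbb{F}})$ is weakly mixing.
   Context: $(X,d)$ compact metric, $\mathbb{F}=(f_n)$ continuous self-maps with $f_n\circ f_m=f_m\circ f_n$ for all $n,m$; $\omega_n=f_n\circ\cdots\circ f_1$. Weakly mixing: for non-empty open $U_1,U_2,V_1,V_2$ there is $n$ with $\omega_n(U_i)\cap V_i\neq\emptyset$, $i=1,2$. $\mathcal{F}(X)$: non-empty finite subsets; $\Psi\subseteq\mathcal{K}(X)$ invariant under all $\omega_k$; induced system $\overline{\omega}_k(A)=\omega_k(A)$, notions defined analogously on $(\Psi,\Delta)$. Admissible topology: hit-and-miss or hit-and-far-miss type with $x\mapsto\{x\}$ continuous; induced maps continuous. *)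

theory Defs
  imports "HOL-Analysis.Analysis"
begin

text \<open>Non-autonomous system: f 1, f 2, ... ; omega f n = f n o ... o f 1, omega f 0 = id.\<close>
fun omega :: "(nat \<Rightarrow> 'b \<Rightarrow> 'b) \<Rightarrow> nat \<Rightarrow> 'b \<Rightarrow> 'b" where
  "omega f 0 = id"
| "omega f (Suc n) = f (Suc n) \<circ> omega f n"

definition weakly_mixing :: "'b topology \<Rightarrow> (nat \<Rightarrow> 'b \<Rightarrow> 'b) \<Rightarrow> bool" where
  "weakly_mixing T f \<longleftrightarrow>
     (\<forall>U1 U2 V1 V2. openin T U1 \<and> openin T U2 \<and> openin T V1 \<and> openin T V2 \<and>
        U1 \<noteq> {} \<and> U2 \<noteq> {} \<and> V1 \<noteq> {} \<and> V2 \<noteq> {} \<longrightarrow>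
        (\<exists>n\<ge>1. omega f n ` U1 \<inter> V1 \<noteq> {} \<and> omega f n ` U2 \<inter> V2 \<noteq> {}))"

definition induced :: "(nat \<Rightarrow> 'a \<Rightarrow> 'a) \<Rightarrow> nat \<Rightarrow> 'a set \<Rightarrow> 'a set" where
  "induced f n A = f n ` A"

definition hit_set :: "'a set set \<Rightarrow> 'a set \<Rightarrow> 'a set set" where
  "hit_set \<Psi> U = {A \<in> \<Psi>. A \<inter> U \<noteq> {}}"

definition miss_set :: "'a set set \<Rightarrow> 'a set \<Rightarrow> 'a set set" where
  "miss_set \<Psi> B = {A \<in> \<Psi>. A \<inter> B = {}}"

definition far_miss_set :: "'a set set \<Rightarrow> 'a::metric_space set \<Rightarrow> 'a set set" where
  "far_miss_set \<Psi> B = {A \<in> \<Psi>. \<exists>e>0. \<forall>a\<in>A. \<forall>b\<in>B. e \<le> dist a b}"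

definition upper_set :: "'a set set \<Rightarrow> 'a set \<Rightarrow> 'a set set" where
  "upper_set \<Psi> U = {A \<in> \<Psi>. A \<subseteq> U}"

definition admissible ::
  "(nat \<Rightarrow> 'a::metric_space \<Rightarrow> 'a) \<Rightarrow> 'a set set \<Rightarrow> 'a set topology \<Rightarrow> bool" where
  "admissible f \<Psi> \<Delta> \<longleftrightarrow>
     (\<exists>\<B>. (\<forall>B\<in>\<B>. closed B) \<and>
        (\<Delta> = topology_generated_by
               ({hit_set \<Psi> U | U. open U} \<union> {miss_set \<Psi> B | B. B \<in> \<B>})
         \<or> \<Delta> = topology_generated_by
               ({hit_set \<Psi> U | U. open U} \<union> {far_miss_set \<Psi> B | B. B \<in> \<B>}))) \<and>
     continuous_map euclidean \<Delta> (\<lambda>x. {x}) \<and>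
     (\<forall>k\<ge>1. continuous_map \<Delta> \<Delta> (omega (induced f) k))"

end

theory Submission
  imports Defs
begin

definition wt :: "'a::metric_space set set \<Rightarrow> 'a set \<Rightarrow> 'a set \<Rightarrow> 'a set set \<Rightarrow> bool" where
  "wt W A Q \<U> \<longleftrightarrow> open Q \<and> finite \<U> \<and> (\<forall>U\<in>\<U>. open U \<and> A \<inter> Q \<inter> U \<noteq> {}) \<and> A \<subseteq> Q \<and>
     (\<forall>F. finite F \<and> F \<noteq> {} \<and> F \<subseteq> Q \<and> (\<forall>U\<in>\<U>. F \<inter> U \<noteq> {}) \<longrightarrow> F \<in> W)"

definition good :: "'a::metric_space set set \<Rightarrow> 'a set set \<Rightarrow> bool" where
  "good \<Psi> W \<longleftrightarrow> W \<subseteq> \<Psi> \<and> (\<forall>A\<in>W. \<exists>Q \<U>. wt W A Q \<U>)"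

lemma wt_Int:
  assumes "wt a A Q1 U1" "wt b A Q2 U2"
  shows "wt (a \<inter> b) A (Q1 \<inter> Q2) (U1 \<union> U2)"
proof -
  note w1 = assms(1)[unfolded wt_def]
  note 1 = w1[THEN conjunct1] w1[THEN conjunct2, THEN conjunct1] w1[THEN conjunct2, THEN conjunct2, THEN conjunct1]
    w1[THEN conjunct2, THEN conjunct2, THEN conjunct2, THEN conjunct1] w1[THEN conjunct2, THEN conjunct2, THEN conjunct2, THEN conjunct2]
  note w2 = assms(2)[unfolded wt_def]
  note 2 = w2[THEN conjunct1] w2[THEN conjunct2, THEN conjunct1] w2[THEN conjunct2, THEN conjunct2, THEN conjunct1]
    w2[THEN conjunct2, THEN conjunct2, THEN conjunct2, THEN conjunct1] w2[THEN conjunct2, THEN conjunct2, THEN conjunct2, THEN conjunct2]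
  have c3: "\<forall>U\<in>U1 \<union> U2. open U \<and> A \<inter> (Q1 \<inter> Q2) \<inter> U \<noteq> {}"
  proof
    fix U assume "U \<in> U1 \<union> U2"
    then show "open U \<and> A \<inter> (Q1 \<inter> Q2) \<inter> U \<noteq> {}"
    proof
      assume "U \<in> U1"
      then have "open U" "A \<inter> Q1 \<inter> U \<noteq> {}" using 1(3) by auto
      moreover have "A \<inter> (Q1 \<inter> Q2) \<inter> U = A \<inter> Q1 \<inter> U" using 2(4) by blast
      ultimately show ?thesis by simp
    next
      assume "U \<in> U2"
      then have "open U" "A \<inter> Q2 \<inter> U \<noteq> {}" using 2(3) by auto
      moreover have "A \<inter> (Q1 \<inter> Q2) \<inter> U = A \<inter> Q2 \<inter> U" using 1(4) by blast
      ultimately show ?thesis by simp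
    qed
  qed
  have c5: "\<forall>F. finite F \<and> F \<noteq> {} \<and> F \<subseteq> Q1 \<inter> Q2 \<and> (\<forall>U\<in>U1 \<union> U2. F \<inter> U \<noteq> {}) \<longrightarrow> F \<in> a \<inter> b"
  proof (intro allI impI)
    fix F assume F: "finite F \<and> F \<noteq> {} \<and> F \<subseteq> Q1 \<inter> Q2 \<and> (\<forall>U\<in>U1 \<union> U2. F \<inter> U \<noteq> {})"
    have "F \<in> a" using 1(5) F by blast
    moreover have "F \<in> b" using 2(5) F by blast
    ultimately show "F \<in> a \<inter> b" by blast
  qed
  show ?thesis unfolding wt_def using 1(1,2,4) 2(1,2,4) c3 c5 by (intro conjI open_Int finite_UnI) auto
qed

lemma wt_mono:
  assumes "wt W A Q \<U>" "W \<subseteq> W'"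
  shows "wt W' A Q \<U>"
proof -
  note w = assms(1)[unfolded wt_def]
  note w5 = w[THEN conjunct2, THEN conjunct2, THEN conjunct2, THEN conjunct2]
  have 5: "\<forall>F. finite F \<and> F \<noteq> {} \<and> F \<subseteq> Q \<and> (\<forall>U\<in>\<U>. F \<inter> U \<noteq> {}) \<longrightarrow> F \<in> W'"
  proof (intro allI impI)
    fix F assume F: "finite F \<and> F \<noteq> {} \<and> F \<subseteq> Q \<and> (\<forall>U\<in>\<U>. F \<inter> U \<noteq> {})"
    have "F \<in> W" by (rule mp[OF spec[OF w5] F])
    then show "F \<in> W'" using assms(2) by (rule subsetD[rotated])
  qed
  show ?thesis unfolding wt_def
    using w[THEN conjunct1] w[THEN conjunct2, THEN conjunct1] w[THEN conjunct2, THEN conjunct2, THEN conjunct1]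
      w[THEN conjunct2, THEN conjunct2, THEN conjunct2, THEN conjunct1] 5
    by (intro conjI)
qed

lemma gen_good:
  assumes "generate_topology_on S W" "\<forall>s\<in>S. good \<Psi> s"
  shows "good \<Psi> W"
  using assms
proof (induction rule: generate_topology_on.induct)
  case Empty
  then show ?case by (simp add: good_def)
next
  case (Int a b)
  have ga: "good \<Psi> a" and gb: "good \<Psi> b" using Int by auto
  show ?case unfolding good_def
  proof (intro conjI ballI)
    show "a \<inter> b \<subseteq> \<Psi>" using ga unfolding good_def by auto
  next
    fix A assume A: "A \<in> a \<inter> b"
    obtain Q1 U1 where 1: "wt a A Q1 U1" using ga A unfolding good_def by blast
    obtain Q2 U2 where 2: "wt b A Q2 U2" using gb A unfolding good_def by blast
    show "\<exists>Q \<U>. wt (a \<inter> b) A Q \<U>" using wt_Int[OF 1 2] by blast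
  qed
next
  case (UN K)
  show ?case unfolding good_def
  proof (intro conjI ballI)
    show "\<Union>K \<subseteq> \<Psi>" using UN unfolding good_def by blast
  next
    fix A assume "A \<in> \<Union>K"
    then obtain k where k: "k \<in> K" "A \<in> k" by auto
    then have "good \<Psi> k" using UN by auto
    then obtain Q U where 1: "wt k A Q U" using k unfolding good_def by blast
    show "\<exists>Q \<U>. wt (\<Union>K) A Q \<U>" using wt_mono[OF 1] k by blast
  qed
next
  case (Basis s)
  then show ?case by auto
qed

lemma good_hit:
  assumes "open U" "{A. finite A \<and> A \<noteq> {}} \<subseteq> \<Psi>"
  shows "good \<Psi> (hit_set \<Psi> U)"
  unfolding good_def
proof (intro conjI ballI)
  show "hit_set \<Psi> U \<subseteq> \<Psi>" by (auto simp: hit_set_def)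
next
  fix A assume A: "A \<in> hit_set \<Psi> U"
  have c3: "\<forall>V\<in>{U}. open V \<and> A \<inter> UNIV \<inter> V \<noteq> {}" using A assms(1) by (simp add: hit_set_def)
  have c5: "\<forall>F. finite F \<and> F \<noteq> {} \<and> F \<subseteq> UNIV \<and> (\<forall>V\<in>{U}. F \<inter> V \<noteq> {}) \<longrightarrow> F \<in> hit_set \<Psi> U"
  proof (intro allI impI)
    fix F assume F: "finite F \<and> F \<noteq> {} \<and> F \<subseteq> UNIV \<and> (\<forall>V\<in>{U}. F \<inter> V \<noteq> {})"
    have "F \<in> {A. finite A \<and> A \<noteq> {}}" using F by simp
    then have "F \<in> \<Psi>" using assms(2) by (rule subsetD[rotated])
    moreover have "F \<inter> U \<noteq> {}" using F by simp
    ultimately show "F \<in> hit_set \<Psi> U" unfolding hit_set_def by simp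
  qed
  have "wt (hit_set \<Psi> U) A UNIV {U}"
    unfolding wt_def by (intro conjI open_UNIV finite.emptyI finite.insertI subset_UNIV c3 c5)
  then show "\<exists>Q \<U>. wt (hit_set \<Psi> U) A Q \<U>" by blast
qed

lemma good_miss:
  assumes "closed B" "{A. finite A \<and> A \<noteq> {}} \<subseteq> \<Psi>"
  shows "good \<Psi> (miss_set \<Psi> B)"
  unfolding good_def
proof (intro conjI ballI)
  show "miss_set \<Psi> B \<subseteq> \<Psi>" by (auto simp: miss_set_def)
next
  fix A assume A: "A \<in> miss_set \<Psi> B"
  have c3: "\<forall>V\<in>{}. open V \<and> A \<inter> (- B) \<inter> V \<noteq> {}" by simp
  have c4: "A \<subseteq> - B" using A by (auto simp: miss_set_def)
  have c1: "open (- B)" using assms(1) by (simp add: open_Compl)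
  have c5: "\<forall>F. finite F \<and> F \<noteq> {} \<and> F \<subseteq> - B \<and> (\<forall>V\<in>{}. F \<inter> V \<noteq> {}) \<longrightarrow> F \<in> miss_set \<Psi> B"
  proof (intro allI impI)
    fix F assume F: "finite F \<and> F \<noteq> {} \<and> F \<subseteq> - B \<and> (\<forall>V\<in>{}. F \<inter> V \<noteq> {})"
    have "F \<in> {A. finite A \<and> A \<noteq> {}}" using F by simp
    then have "F \<in> \<Psi>" using assms(2) by (rule subsetD[rotated])
    moreover have "F \<inter> B = {}" using F by blast
    ultimately show "F \<in> miss_set \<Psi> B" unfolding miss_set_def by simp
  qed
  have "wt (miss_set \<Psi> B) A (- B) {}"
    unfolding wt_def by (intro conjI c1 finite.emptyI c3 c4 c5)
  then show "\<exists>Q \<U>. wt (miss_set \<Psi> B) A Q \<U>" by blast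
qed

lemma far_finite:
  fixes B :: "'a::metric_space set"
  assumes "closed B" "finite F" "F \<noteq> {}" "F \<subseteq> - B"
  shows "\<exists>e>0. \<forall>a\<in>F. \<forall>b\<in>B. e \<le> dist a b"
proof (cases "B = {}")
  case True
  have "(1::real) > 0 \<and> (\<forall>a\<in>F. \<forall>b\<in>B. 1 \<le> dist a b)" using True by simp
  then show ?thesis by blast
next
  case False
  have pos: "\<forall>a\<in>F. infdist a B > 0"
  proof
    fix a assume "a \<in> F"
    then have "a \<notin> B" using assms(4) by blast
    then have "infdist a B \<noteq> 0" using in_closed_iff_infdist_zero[OF assms(1) False] by simp
    then show "infdist a B > 0" using infdist_nonneg[of a B] by linarith
  qed
  show ?thesis
  proof (intro exI[of _ "Min ((\<lambda>a. infdist a B) ` F)"] conjI ballI)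
    show "Min ((\<lambda>a. infdist a B) ` F) > 0" using pos assms(2,3) by simp
  next
    fix a b assume ab: "a \<in> F" "b \<in> B"
    have "Min ((\<lambda>a. infdist a B) ` F) \<le> infdist a B" using ab assms(2) by simp
    also have "\<dots> \<le> dist a b" using ab(2) by (rule infdist_le)
    finally show "Min ((\<lambda>a. infdist a B) ` F) \<le> dist a b" .
  qed
qed

lemma good_far:
  assumes "closed B" "{A. finite A \<and> A \<noteq> {}} \<subseteq> \<Psi>"
  shows "good \<Psi> (far_miss_set \<Psi> B)"
  unfolding good_def
proof (intro conjI ballI)
  show "far_miss_set \<Psi> B \<subseteq> \<Psi>" by (auto simp: far_miss_set_def)
next
  fix A assume A: "A \<in> far_miss_set \<Psi> B"
  obtain e where e: "e > 0" "\<forall>a\<in>A. \<forall>b\<in>B. e \<le> dist a b" using A unfolding far_miss_set_def by blast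
  have c4: "A \<subseteq> - B"
  proof
    fix a assume a: "a \<in> A"
    show "a \<in> - B"
    proof
      assume "a \<in> B"
      then have "e \<le> dist a a" using e(2) a by blast
      then show False using e(1) by simp
    qed
  qed
  have c3: "\<forall>V\<in>{}. open V \<and> A \<inter> (- B) \<inter> V \<noteq> {}" by simp
  have c1: "open (- B)" using assms(1) by (simp add: open_Compl)
  have c5: "\<forall>F. finite F \<and> F \<noteq> {} \<and> F \<subseteq> - B \<and> (\<forall>V\<in>{}. F \<inter> V \<noteq> {}) \<longrightarrow> F \<in> far_miss_set \<Psi> B"
  proof (intro allI impI)
    fix F assume F: "finite F \<and> F \<noteq> {} \<and> F \<subseteq> - B \<and> (\<forall>V\<in>{}. F \<inter> V \<noteq> {})"
    have "F \<in> {A. finite A \<and> A \<noteq> {}}" using F by simp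
    then have "F \<in> \<Psi>" using assms(2) by (rule subsetD[rotated])
    moreover have "\<exists>e>0. \<forall>a\<in>F. \<forall>b\<in>B. e \<le> dist a b"
      using far_finite[OF assms(1)] F by simp
    ultimately show "F \<in> far_miss_set \<Psi> B" unfolding far_miss_set_def by simp
  qed
  have "wt (far_miss_set \<Psi> B) A (- B) {}"
    unfolding wt_def by (intro conjI c1 finite.emptyI c3 c4 c5)
  then show "\<exists>Q \<U>. wt (far_miss_set \<Psi> B) A Q \<U>" by blast
qed

lemma omega_induced: "omega (induced f) n A = omega f n ` A"
  by (induction n arbitrary: A) (auto simp: induced_def image_comp)

lemma omega_cont:
  assumes "\<forall>n\<ge>1. continuous_on UNIV (f n)"
  shows "continuous_on UNIV (omega f k)"
proof (induction k)
  case 0 then show ?case by (simp add: continuous_on_id)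
next
  case (Suc k)
  have "continuous_on UNIV (f (Suc k))" using assms by simp
  then have "continuous_on (range (omega f k)) (f (Suc k))" by (rule continuous_on_subset) simp
  then show ?case using continuous_on_compose[OF Suc] by simp
qed

lemma f_omega_comm:
  assumes "\<forall>n\<ge>1. \<forall>m\<ge>1. f n \<circ> f m = f m \<circ> f n" "m \<ge> 1"
  shows "f m \<circ> omega f k = omega f k \<circ> f m"
proof (induction k)
  case 0 then show ?case by simp
next
  case (Suc k)
  have "f m \<circ> omega f (Suc k) = (f m \<circ> f (Suc k)) \<circ> omega f k" by (simp add: comp_assoc)
  also have "\<dots> = f (Suc k) \<circ> (f m \<circ> omega f k)"
  proof -
    have "f m \<circ> f (Suc k) = f (Suc k) \<circ> f m" using assms by simp
    then show ?thesis by (simp add: comp_assoc)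
  qed
  also have "\<dots> = f (Suc k) \<circ> (omega f k \<circ> f m)" by (simp only: Suc.IH)
  also have "\<dots> = omega f (Suc k) \<circ> f m" by (simp add: comp_assoc)
  finally show ?case .
qed

lemma omega_comm:
  assumes "\<forall>n\<ge>1. \<forall>m\<ge>1. f n \<circ> f m = f m \<circ> f n"
  shows "omega f n (omega f k x) = omega f k (omega f n x)"
proof (induction n arbitrary: x)
  case 0 then show ?case by simp
next
  case (Suc n)
  have "omega f (Suc n) (omega f k x) = f (Suc n) (omega f k (omega f n x))" using Suc by simp
  also have "\<dots> = omega f k (f (Suc n) (omega f n x))"
    using f_omega_comm[OF assms, of "Suc n" k] by (metis comp_apply le_add1 plus_1_eq_Suc)
  finally show ?case by simp
qed

lemma multi_wm:
  fixes f :: "nat \<Rightarrow> 'a::metric_space \<Rightarrow> 'a"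
  assumes wm: "weakly_mixing euclidean f"
    and cont: "\<forall>n\<ge>1. continuous_on UNIV (f n)"
    and comm: "\<forall>n\<ge>1. \<forall>m\<ge>1. f n \<circ> f m = f m \<circ> f n"
    and P: "finite P" "P \<noteq> {}" "\<forall>p\<in>P. open (fst p) \<and> open (snd p) \<and> fst p \<noteq> {} \<and> snd p \<noteq> {}"
  shows "\<exists>U V. open U \<and> open V \<and> U \<noteq> {} \<and> V \<noteq> {} \<and>
     (\<forall>n\<ge>1. omega f n ` U \<inter> V \<noteq> {} \<longrightarrow> (\<forall>p\<in>P. omega f n ` fst p \<inter> snd p \<noteq> {}))"
  using P
proof (induction P rule: finite_ne_induct)
  case (singleton p)
  then show ?case by (intro exI[of _ "fst p"] exI[of _ "snd p"]) auto
next
  case (insert p P)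
  then obtain U V where UV: "open U" "open V" "U \<noteq> {}" "V \<noteq> {}"
    "\<forall>n\<ge>1. omega f n ` U \<inter> V \<noteq> {} \<longrightarrow> (\<forall>p\<in>P. omega f n ` fst p \<inter> snd p \<noteq> {})" by auto
  obtain U2 V2 where p: "p = (U2, V2)" by (cases p)
  have p2: "open U2" "open V2" "U2 \<noteq> {}" "V2 \<noteq> {}" using insert p by auto
  obtain k where k: "k \<ge> 1" "omega f k ` U \<inter> U2 \<noteq> {}" "omega f k ` V \<inter> V2 \<noteq> {}"
    using wm UV p2 unfolding weakly_mixing_def by (metis open_openin)
  have ck: "continuous_on UNIV (omega f k)" using omega_cont[OF cont] .
  define U' where "U' = U \<inter> omega f k -` U2"
  define V' where "V' = V \<inter> omega f k -` V2"
  have oU': "open U'" unfolding U'_def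
    using ck p2 UV by (metis open_Int open_vimage)
  have oV': "open V'" unfolding V'_def
    using ck p2 UV by (metis open_Int open_vimage)
  have "U' \<noteq> {}" "V' \<noteq> {}" using k unfolding U'_def V'_def by auto
  moreover have "\<forall>n\<ge>1. omega f n ` U' \<inter> V' \<noteq> {} \<longrightarrow> (\<forall>q\<in>insert p P. omega f n ` fst q \<inter> snd q \<noteq> {})"
  proof (intro allI impI)
    fix n :: nat assume n: "n \<ge> 1" "omega f n ` U' \<inter> V' \<noteq> {}"
    then obtain x where x: "x \<in> U'" "omega f n x \<in> V'" by auto
    have "omega f n ` U \<inter> V \<noteq> {}" using x unfolding U'_def V'_def by auto
    then have 1: "\<forall>q\<in>P. omega f n ` fst q \<inter> snd q \<noteq> {}" using UV n by auto
    have "omega f k x \<in> U2" using x unfolding U'_def by auto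
    moreover have "omega f n (omega f k x) \<in> V2"
      using x omega_comm[OF comm, of n k x] unfolding V'_def by auto
    ultimately have "omega f n ` fst p \<inter> snd p \<noteq> {}" using p by auto
    then show "\<forall>q\<in>insert p P. omega f n ` fst q \<inter> snd q \<noteq> {}" using 1 by auto
  qed
  ultimately show ?case using oU' oV' by blast
qed

lemma multi_wm2:
  fixes f :: "nat \<Rightarrow> 'a::metric_space \<Rightarrow> 'a"
  assumes wm: "weakly_mixing euclidean f"
    and cont: "\<forall>n\<ge>1. continuous_on UNIV (f n)"
    and comm: "\<forall>n\<ge>1. \<forall>m\<ge>1. f n \<circ> f m = f m \<circ> f n"
    and P: "finite P" "P \<noteq> {}" "\<forall>p\<in>P. open (fst p) \<and> open (snd p) \<and> fst p \<noteq> {} \<and> snd p \<noteq> {}"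
  shows "\<exists>n\<ge>1. \<forall>p\<in>P. omega f n ` fst p \<inter> snd p \<noteq> {}"
proof -
  obtain U V where UV: "open U" "open V" "U \<noteq> {}" "V \<noteq> {}"
    "\<forall>n\<ge>1. omega f n ` U \<inter> V \<noteq> {} \<longrightarrow> (\<forall>p\<in>P. omega f n ` fst p \<inter> snd p \<noteq> {})"
    using multi_wm[OF assms] by blast
  obtain n where n: "n \<ge> 1" "omega f n ` U \<inter> V \<noteq> {}"
    using wm UV unfolding weakly_mixing_def by (metis open_openin)
  have "\<forall>p\<in>P. omega f n ` fst p \<inter> snd p \<noteq> {}" using UV(5) n by blast
  then show ?thesis using n(1) by blast
qed


definition wt2 :: "'a::metric_space set set \<Rightarrow> 'a set \<Rightarrow> 'a set set \<Rightarrow> bool" where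
  "wt2 W Q \<U> \<longleftrightarrow> open Q \<and> finite \<U> \<and> (\<forall>U\<in>\<U>. open U \<and> U \<inter> Q \<noteq> {}) \<and> Q \<noteq> {} \<and>
     (\<forall>F. finite F \<and> F \<noteq> {} \<and> F \<subseteq> Q \<and> (\<forall>U\<in>\<U>. F \<inter> U \<noteq> {}) \<longrightarrow> F \<in> W)"

lemma wt2E:
  assumes "wt2 W Q \<U>"
  shows "open Q" "finite \<U>" "\<forall>U\<in>\<U>. open U \<and> U \<inter> Q \<noteq> {}" "Q \<noteq> {}"
    "\<And>F. finite F \<Longrightarrow> F \<noteq> {} \<Longrightarrow> F \<subseteq> Q \<Longrightarrow> (\<forall>U\<in>\<U>. F \<inter> U \<noteq> {}) \<Longrightarrow> F \<in> W"
proof -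
  note w = assms[unfolded wt2_def]
  show "open Q" by (rule w[THEN conjunct1])
  show "finite \<U>" by (rule w[THEN conjunct2, THEN conjunct1])
  show "\<forall>U\<in>\<U>. open U \<and> U \<inter> Q \<noteq> {}" by (rule w[THEN conjunct2, THEN conjunct2, THEN conjunct1])
  show "Q \<noteq> {}" by (rule w[THEN conjunct2, THEN conjunct2, THEN conjunct2, THEN conjunct1])
  fix F assume "finite F" "F \<noteq> {}" "F \<subseteq> Q" "\<forall>U\<in>\<U>. F \<inter> U \<noteq> {}"
  then have "finite F \<and> F \<noteq> {} \<and> F \<subseteq> Q \<and> (\<forall>U\<in>\<U>. F \<inter> U \<noteq> {})" by (intro conjI)
  then show "F \<in> W" by (rule mp[OF spec[OF w[THEN conjunct2, THEN conjunct2, THEN conjunct2, THEN conjunct2]]])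
qed

lemma good_wit:
  assumes g: "good \<Psi> W" and A: "A \<in> W" and ne: "A \<noteq> {}"
  shows "\<exists>Q \<U>. wt2 W Q \<U>"
proof -
  obtain Q \<U> where w0: "wt W A Q \<U>" using g A unfolding good_def by blast
  note w = w0[unfolded wt_def]
  have QU: "open Q" "finite \<U>" "\<forall>U\<in>\<U>. open U \<and> A \<inter> Q \<inter> U \<noteq> {}" "A \<subseteq> Q"
      "\<forall>F. finite F \<and> F \<noteq> {} \<and> F \<subseteq> Q \<and> (\<forall>U\<in>\<U>. F \<inter> U \<noteq> {}) \<longrightarrow> F \<in> W"
    by (rule w[THEN conjunct1] w[THEN conjunct2, THEN conjunct1] w[THEN conjunct2, THEN conjunct2, THEN conjunct1]
      w[THEN conjunct2, THEN conjunct2, THEN conjunct2, THEN conjunct1] w[THEN conjunct2, THEN conjunct2, THEN conjunct2, THEN conjunct2])+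
  have 1: "\<forall>U\<in>\<U>. open U \<and> U \<inter> Q \<noteq> {}"
  proof
    fix U assume "U \<in> \<U>"
    then have "open U \<and> A \<inter> Q \<inter> U \<noteq> {}" using QU(3) by (rule bspec[rotated])
    then show "open U \<and> U \<inter> Q \<noteq> {}" by blast
  qed
  have 2: "Q \<noteq> {}" using QU(4) ne by blast
  have "wt2 W Q \<U>" unfolding wt2_def by (intro conjI QU(1,2,5) 1 2)
  then show ?thesis by blast
qed

theorem mainTheorem6:
  fixes f :: "nat \<Rightarrow> 'a::metric_space \<Rightarrow> 'a"
    and \<Psi> :: "'a set set"
    and \<Delta> :: "'a set topology"
  assumes compact_X: "compact (UNIV :: 'a set)"
    and cont: "\<forall>n\<ge>1. continuous_on UNIV (f n)"
    and comm: "\<forall>n\<ge>1. \<forall>m\<ge>1. f n \<circ> f m = f m \<circ> f n"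
    and Psi_K: "\<Psi> \<subseteq> {A. A \<noteq> {} \<and> compact A}"
    and Psi_inv: "\<forall>k\<ge>1. \<forall>A\<in>\<Psi>. omega f k ` A \<in> \<Psi>"
    and finite_sub: "{A. finite A \<and> A \<noteq> {}} \<subseteq> \<Psi>"
    and adm: "admissible f \<Psi> \<Delta>"
    and base: "\<exists>\<beta>. topological_basis \<beta> \<and> (\<forall>U\<in>\<beta>. openin \<Delta> (upper_set \<Psi> U))"
  shows "weakly_mixing euclidean f \<longleftrightarrow> weakly_mixing \<Delta> (induced f)"
proof
  assume wm: "weakly_mixing euclidean f"
  obtain \<B> where B: "\<forall>B\<in>\<B>. closed B" and
    D: "\<Delta> = topology_generated_by ({hit_set \<Psi> U | U. open U} \<union> {miss_set \<Psi> B | B. B \<in> \<B>})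
         \<or> \<Delta> = topology_generated_by ({hit_set \<Psi> U | U. open U} \<union> {far_miss_set \<Psi> B | B. B \<in> \<B>})"
    using adm unfolding admissible_def by blast
  have goodD: "good \<Psi> W" if "openin \<Delta> W" for W
    using D
  proof
    assume D1: "\<Delta> = topology_generated_by ({hit_set \<Psi> U | U. open U} \<union> {miss_set \<Psi> B | B. B \<in> \<B>})"
    show ?thesis
      apply (rule gen_good[of "{hit_set \<Psi> U | U. open U} \<union> {miss_set \<Psi> B | B. B \<in> \<B>}"])
      using that D1 openin_topology_generated_by apply blast
    proof
      fix s assume "s \<in> {hit_set \<Psi> U | U. open U} \<union> {miss_set \<Psi> B | B. B \<in> \<B>}"
      then show "good \<Psi> s"
      proof
        assume "s \<in> {hit_set \<Psi> U | U. open U}"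
        then obtain U where "open U" "s = hit_set \<Psi> U" by blast
        then show ?thesis using good_hit[OF _ finite_sub] by blast
      next
        assume "s \<in> {miss_set \<Psi> B | B. B \<in> \<B>}"
        then obtain U where "U \<in> \<B>" "s = miss_set \<Psi> U" by blast
        then show ?thesis using good_miss[OF _ finite_sub] B by blast
      qed
    qed
  next
    assume D1: "\<Delta> = topology_generated_by ({hit_set \<Psi> U | U. open U} \<union> {far_miss_set \<Psi> B | B. B \<in> \<B>})"
    show ?thesis
      apply (rule gen_good[of "{hit_set \<Psi> U | U. open U} \<union> {far_miss_set \<Psi> B | B. B \<in> \<B>}"])
      using that D1 openin_topology_generated_by apply blast
    proof
      fix s assume "s \<in> {hit_set \<Psi> U | U. open U} \<union> {far_miss_set \<Psi> B | B. B \<in> \<B>}"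
      then show "good \<Psi> s"
      proof
        assume "s \<in> {hit_set \<Psi> U | U. open U}"
        then obtain U where "open U" "s = hit_set \<Psi> U" by blast
        then show ?thesis using good_hit[OF _ finite_sub] by blast
      next
        assume "s \<in> {far_miss_set \<Psi> B | B. B \<in> \<B>}"
        then obtain U where "U \<in> \<B>" "s = far_miss_set \<Psi> U" by blast
        then show ?thesis using good_far[OF _ finite_sub] B by blast
      qed
    qed
  qed
  have wit: "\<exists>Q \<U>. wt2 W Q \<U>" if "openin \<Delta> W" "W \<noteq> {}" for W
  proof -
    obtain A where A: "A \<in> W" using \<open>W \<noteq> {}\<close> by blast
    have g: "good \<Psi> W" using goodD that(1) by blast
    then have "W \<subseteq> \<Psi>" by (simp add: good_def)
    then have "A \<noteq> {}" using A Psi_K by blast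
    then show ?thesis by (rule good_wit[OF g A])
  qed
  show "weakly_mixing \<Delta> (induced f)"
    unfolding weakly_mixing_def
  proof (intro allI impI)
    fix W1 W2 W3 W4
    assume h: "openin \<Delta> W1 \<and> openin \<Delta> W2 \<and> openin \<Delta> W3 \<and> openin \<Delta> W4 \<and>
        W1 \<noteq> {} \<and> W2 \<noteq> {} \<and> W3 \<noteq> {} \<and> W4 \<noteq> {}"
    have "openin \<Delta> W1" "W1 \<noteq> {}" using h by auto
    then obtain Q1 U1 where "wt2 W1 Q1 U1" using wit by blast
    note 1 = wt2E[OF this]
    have "openin \<Delta> W2" "W2 \<noteq> {}" using h by auto
    then obtain Q2 U2 where "wt2 W2 Q2 U2" using wit by blast
    note 2 = wt2E[OF this]
    have "openin \<Delta> W3" "W3 \<noteq> {}" using h by auto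
    then obtain Q3 U3 where "wt2 W3 Q3 U3" using wit by blast
    note 3 = wt2E[OF this]
    have "openin \<Delta> W4" "W4 \<noteq> {}" using h by auto
    then obtain Q4 U4 where "wt2 W4 Q4 U4" using wit by blast
    note 4 = wt2E[OF this]
    define P1 where "P1 = insert (Q1, Q3) ((\<lambda>U. (U \<inter> Q1, Q3)) ` U1 \<union> (\<lambda>V. (Q1, V \<inter> Q3)) ` U3)"
    define P2 where "P2 = insert (Q2, Q4) ((\<lambda>U. (U \<inter> Q2, Q4)) ` U2 \<union> (\<lambda>V. (Q2, V \<inter> Q4)) ` U4)"
    have fin: "finite (P1 \<union> P2)" unfolding P1_def P2_def using 1(2) 2(2) 3(2) 4(2) by simp
    have ok: "\<forall>p\<in>P1 \<union> P2. open (fst p) \<and> open (snd p) \<and> fst p \<noteq> {} \<and> snd p \<noteq> {}"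
    proof -
      have a1: "\<forall>U\<in>U1. open (U \<inter> Q1) \<and> U \<inter> Q1 \<noteq> {}" using 1(1,3) open_Int by blast
      have a2: "\<forall>U\<in>U2. open (U \<inter> Q2) \<and> U \<inter> Q2 \<noteq> {}" using 2(1,3) open_Int by blast
      have a3: "\<forall>U\<in>U3. open (U \<inter> Q3) \<and> U \<inter> Q3 \<noteq> {}" using 3(1,3) open_Int by blast
      have a4: "\<forall>U\<in>U4. open (U \<inter> Q4) \<and> U \<inter> Q4 \<noteq> {}" using 4(1,3) open_Int by blast
      show ?thesis unfolding P1_def P2_def
        using a1 a2 a3 a4 1(1,4) 2(1,4) 3(1,4) 4(1,4) by (simp add: ball_Un)
    qed
    have ne: "P1 \<union> P2 \<noteq> {}" unfolding P1_def by simp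
    obtain n where n: "n \<ge> 1" "\<forall>p\<in>P1 \<union> P2. omega f n ` fst p \<inter> snd p \<noteq> {}"
      using multi_wm2[OF wm cont comm fin ne ok] by blast
    then have "\<forall>p\<in>P1 \<union> P2. \<exists>x. x \<in> fst p \<and> omega f n x \<in> snd p" by blast
    from bchoice[OF this] obtain g where g: "\<forall>p\<in>P1 \<union> P2. g p \<in> fst p \<and> omega f n (g p) \<in> snd p" by blast
    have gP1: "\<forall>p\<in>P1. g p \<in> fst p \<and> omega f n (g p) \<in> snd p" and gP2: "\<forall>p\<in>P2. g p \<in> fst p \<and> omega f n (g p) \<in> snd p"
      using g by auto
    have fP1: "finite P1" "P1 \<noteq> {}" and fP2: "finite P2" "P2 \<noteq> {}" using fin unfolding P1_def P2_def by auto
    have "g ` P1 \<subseteq> Q1"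
    proof
      fix y assume "y \<in> g ` P1"
      then obtain p where p: "p \<in> P1" "y = g p" by blast
      have "fst p \<subseteq> Q1" using p(1) unfolding P1_def by auto
      then show "y \<in> Q1" using p gP1 by blast
    qed
    moreover have "\<forall>U\<in>U1. g ` P1 \<inter> U \<noteq> {}"
    proof
      fix U assume U: "U \<in> U1"
      then have "(U \<inter> Q1, Q3) \<in> P1" unfolding P1_def by blast
      then show "g ` P1 \<inter> U \<noteq> {}" using gP1 by fastforce
    qed
    moreover have "finite (g ` P1)" "g ` P1 \<noteq> {}" using fP1 by simp_all
    ultimately have F1: "g ` P1 \<in> W1" using 1(5) by blast
    have "omega f n ` g ` P1 \<subseteq> Q3"
    proof
      fix y assume "y \<in> omega f n ` g ` P1"
      then obtain p where p: "p \<in> P1" "y = omega f n (g p)" by blast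
      have "snd p \<subseteq> Q3" using p(1) unfolding P1_def by auto
      then show "y \<in> Q3" using p gP1 by blast
    qed
    moreover have "\<forall>U\<in>U3. omega f n ` g ` P1 \<inter> U \<noteq> {}"
    proof
      fix U assume U: "U \<in> U3"
      then have "(Q1, U \<inter> Q3) \<in> P1" unfolding P1_def by blast
      then show "omega f n ` g ` P1 \<inter> U \<noteq> {}" using gP1 by fastforce
    qed
    moreover have "finite (omega f n ` g ` P1)" "omega f n ` g ` P1 \<noteq> {}" using fP1 by simp_all
    ultimately have F3: "omega f n ` g ` P1 \<in> W3" using 3(5) by blast
    have "g ` P2 \<subseteq> Q2"
    proof
      fix y assume "y \<in> g ` P2"
      then obtain p where p: "p \<in> P2" "y = g p" by blast
      have "fst p \<subseteq> Q2" using p(1) unfolding P2_def by auto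
      then show "y \<in> Q2" using p gP2 by blast
    qed
    moreover have "\<forall>U\<in>U2. g ` P2 \<inter> U \<noteq> {}"
    proof
      fix U assume U: "U \<in> U2"
      then have "(U \<inter> Q2, Q4) \<in> P2" unfolding P2_def by blast
      then show "g ` P2 \<inter> U \<noteq> {}" using gP2 by fastforce
    qed
    moreover have "finite (g ` P2)" "g ` P2 \<noteq> {}" using fP2 by simp_all
    ultimately have F2: "g ` P2 \<in> W2" using 2(5) by blast
    have "omega f n ` g ` P2 \<subseteq> Q4"
    proof
      fix y assume "y \<in> omega f n ` g ` P2"
      then obtain p where p: "p \<in> P2" "y = omega f n (g p)" by blast
      have "snd p \<subseteq> Q4" using p(1) unfolding P2_def by auto
      then show "y \<in> Q4" using p gP2 by blast
    qed
    moreover have "\<forall>U\<in>U4. omega f n ` g ` P2 \<inter> U \<noteq> {}"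
    proof
      fix U assume U: "U \<in> U4"
      then have "(Q2, U \<inter> Q4) \<in> P2" unfolding P2_def by blast
      then show "omega f n ` g ` P2 \<inter> U \<noteq> {}" using gP2 by fastforce
    qed
    moreover have "finite (omega f n ` g ` P2)" "omega f n ` g ` P2 \<noteq> {}" using fP2 by simp_all
    ultimately have F4: "omega f n ` g ` P2 \<in> W4" using 4(5) by blast
    have e1: "omega (induced f) n (g ` P1) = omega f n ` g ` P1" and e2: "omega (induced f) n (g ` P2) = omega f n ` g ` P2"
      by (simp_all add: omega_induced)
    show "\<exists>n\<ge>1. omega (induced f) n ` W1 \<inter> W3 \<noteq> {} \<and> omega (induced f) n ` W2 \<inter> W4 \<noteq> {}"
    proof (intro exI[of _ n] conjI)
      show "n \<ge> 1" using n(1) .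
      have "omega (induced f) n (g ` P1) \<in> omega (induced f) n ` W1" using F1 by (rule imageI)
      moreover have "omega (induced f) n (g ` P1) \<in> W3" using F3 e1 by simp
      ultimately have "omega (induced f) n (g ` P1) \<in> omega (induced f) n ` W1 \<inter> W3" by (rule IntI)
      then show "omega (induced f) n ` W1 \<inter> W3 \<noteq> {}" by blast
      have "omega (induced f) n (g ` P2) \<in> omega (induced f) n ` W2" using F2 by (rule imageI)
      moreover have "omega (induced f) n (g ` P2) \<in> W4" using F4 e2 by simp
      ultimately have "omega (induced f) n (g ` P2) \<in> omega (induced f) n ` W2 \<inter> W4" by (rule IntI)
      then show "omega (induced f) n ` W2 \<inter> W4 \<noteq> {}" by blast
    qed
  qed
next
  assume wm: "weakly_mixing \<Delta> (induced f)"
  obtain \<beta> where \<beta>: "topological_basis \<beta>" "\<forall>U\<in>\<beta>. openin \<Delta> (upper_set \<Psi> U)" using base by blast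
  have sub: "\<exists>B. openin \<Delta> (upper_set \<Psi> B) \<and> upper_set \<Psi> B \<noteq> {} \<and> B \<subseteq> U"
    if "open U" "U \<noteq> {}" for U
  proof -
    obtain x where "x \<in> U" using \<open>U \<noteq> {}\<close> by blast
    then obtain B where B: "B \<in> \<beta>" "x \<in> B" "B \<subseteq> U" using topological_basisE[OF \<beta>(1) \<open>open U\<close>] by blast
    have "{x} \<in> upper_set \<Psi> B" using B finite_sub unfolding upper_set_def by auto
    then show ?thesis using B \<beta>(2) by blast
  qed
  show "weakly_mixing euclidean f"
    unfolding weakly_mixing_def
  proof (intro allI impI)
    fix U1 U2 V1 V2 :: "'a set"
    assume h: "openin euclidean U1 \<and> openin euclidean U2 \<and> openin euclidean V1 \<and> openin euclidean V2 \<and>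
        U1 \<noteq> {} \<and> U2 \<noteq> {} \<and> V1 \<noteq> {} \<and> V2 \<noteq> {}"
    obtain B1 where B1: "openin \<Delta> (upper_set \<Psi> B1)" "upper_set \<Psi> B1 \<noteq> {}" "B1 \<subseteq> U1" using sub h by (meson open_openin)
    obtain B2 where B2: "openin \<Delta> (upper_set \<Psi> B2)" "upper_set \<Psi> B2 \<noteq> {}" "B2 \<subseteq> U2" using sub h by (meson open_openin)
    obtain C1 where C1: "openin \<Delta> (upper_set \<Psi> C1)" "upper_set \<Psi> C1 \<noteq> {}" "C1 \<subseteq> V1" using sub h by (meson open_openin)
    obtain C2 where C2: "openin \<Delta> (upper_set \<Psi> C2)" "upper_set \<Psi> C2 \<noteq> {}" "C2 \<subseteq> V2" using sub h by (meson open_openin)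
    have wm': "\<exists>n\<ge>1. omega (induced f) n ` upper_set \<Psi> B1 \<inter> upper_set \<Psi> C1 \<noteq> {} \<and>
        omega (induced f) n ` upper_set \<Psi> B2 \<inter> upper_set \<Psi> C2 \<noteq> {}"
      using wm[unfolded weakly_mixing_def, rule_format, of "upper_set \<Psi> B1" "upper_set \<Psi> B2" "upper_set \<Psi> C1" "upper_set \<Psi> C2"]
        B1(1,2) B2(1,2) C1(1,2) C2(1,2) by simp
    then obtain n where n: "n \<ge> 1" "omega (induced f) n ` upper_set \<Psi> B1 \<inter> upper_set \<Psi> C1 \<noteq> {}"
      "omega (induced f) n ` upper_set \<Psi> B2 \<inter> upper_set \<Psi> C2 \<noteq> {}" by blast
    have key: "omega f n ` U \<inter> V \<noteq> {}"
      if k1: "omega (induced f) n ` upper_set \<Psi> B \<inter> upper_set \<Psi> C \<noteq> {}" and k2: "B \<subseteq> U" and k3: "C \<subseteq> V" for B C U V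
    proof -
      obtain A where A: "A \<in> upper_set \<Psi> B" "omega (induced f) n A \<in> upper_set \<Psi> C"
        using k1 by blast
      have A': "A \<in> \<Psi>" "A \<subseteq> B" "omega f n ` A \<subseteq> C"
        using A unfolding upper_set_def omega_induced by auto
      then have "A \<noteq> {}" using Psi_K by blast
      then obtain a where a: "a \<in> A" by blast
      have "omega f n a \<in> omega f n ` U" using a A'(2) k2 by blast
      moreover have "omega f n a \<in> V" using a A'(3) k3 by blast
      ultimately show ?thesis by blast
    qed
    have "omega f n ` U1 \<inter> V1 \<noteq> {}" by (rule key[OF n(2) B1(3) C1(3)])
    moreover have "omega f n ` U2 \<inter> V2 \<noteq> {}" by (rule key[OF n(3) B2(3) C2(3)])
    ultimately show "\<exists>n\<ge>1. omega f n ` U1 \<inter> V1 \<noteq> {} \<and> omega f n ` U2 \<inter> V2 \<noteq> {}"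
      using n(1) by blast
  qed
qed

end
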